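(* Let $\Sigma$ be a finite alphabet and suppose $C:\Sigma^k\to\Sigma^n$ is a $(q,\delta,1-\varepsilon,s)$-relaxed locally decodable code with a nonadaptive relaxed decoder, where $s<|\Sigma|^{-q}$. Then for any error radius \[ r\in\Bigl(0,\ \tfrac{\delta(|\Sigma|-1)}{q|\Sigma|}\Bigl(1-\tfrac{\varepsilon|\Sigma|}{|\Sigma|-1}-s|\Sigma|^{q}\Bigr)\Bigr), \] the code $C$ is also a \[ \Bigl(q,\ r,\ \varepsilon+s|\Sigma|^{q}\Bigl(1-\tfrac{1}{|\Sigma|}\Bigr)+\tfrac{rq}{\delta}\Bigr)\text{-locally decodable code}. \] In particular, for $\Sigma=\{0,1\}$ it is a $\bigl(q,r,\varepsilon+\frac{s2^q}{2}+\frac{rq}{\delta}\bigr)$-locally decodable code.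
   Context: $\Delta$ denotes Hamming distance. A code $C:\Sigma^k\to\Sigma^n$ is a $(q,\delta,s)$-LDC if there is a randomized decoder reading at most $q$ positions of its oracle $y\in\Sigma^n$ and outputting a symbol in $\Sigma$ such that for all $b\in\Sigma^k$, $i\in[k]$, $y$ with $\Delta(y,C(b))\le\delta n$, $\Pr[\mathsf{Dec}^y(i)\ne b_i]\le s$. $C$ is a $(q,\delta,c,s)$-RLDC if there is a $q$-query decoder with outputs in $\Sigma\cup\{\bot\}$ such that for all such $b,i,y$: (completeness) $\Pr[\mathsf{Dec}^{C(b)}(i)=b_i]\ge c$, and (soundness) $\Pr[\mathsf{Dec}^y(i)\notin\{b_i,\bot\}]\le s$. A decoder is nonadaptive if the positions it queries do not depend on answers to earlier queries. *)

theory Defs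
  imports "HOL-Probability.Probability"
begin

text \<open>Words over the alphabet 'a are lists; a code C maps words of length k to
words of length n. Positions are 0-based.\<close>

definition hamming :: "'a list \<Rightarrow> 'a list \<Rightarrow> nat" where
  "hamming x y = card {j. j < length x \<and> j < length y \<and> x ! j \<noteq> y ! j}"

text \<open>A deterministic query algorithm (possibly adaptive) is a decision tree: it either
outputs a value, or queries a position j and continues depending on the answer.\<close>

datatype ('s, 'o) dtree = Leaf 'o | Query nat "'s \<Rightarrow> ('s, 'o) dtree"

primrec eval_tree :: "('s, 'o) dtree \<Rightarrow> 's list \<Rightarrow> 'o" where
  "eval_tree (Leaf v) y = v"
| "eval_tree (Query j g) y = eval_tree (g (y ! j)) y"

inductive valid_tree :: "nat \<Rightarrow> nat \<Rightarrow> ('s, 'o) dtree \<Rightarrow> bool" for n where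
  "valid_tree n q (Leaf v)"
| "j < n \<Longrightarrow> (\<And>a. valid_tree n q (g a)) \<Longrightarrow> valid_tree n (Suc q) (Query j g)"

text \<open>follows ps t: the positions queried by t (along every path) are a prefix of ps,
i.e. they do not depend on answers to earlier queries.\<close>
inductive follows :: "nat list \<Rightarrow> ('s, 'o) dtree \<Rightarrow> bool" where
  "follows ps (Leaf v)"
| "(\<And>a. follows ps (g a)) \<Longrightarrow> follows (j # ps) (Query j g)"

text \<open>A randomized decoder is, for each index i, a probability distribution over
decision trees.\<close>

definition query_decoder :: "nat \<Rightarrow> nat \<Rightarrow> nat \<Rightarrow> (nat \<Rightarrow> ('s, 'o) dtree pmf) \<Rightarrow> bool" where
  "query_decoder k n q Dec \<longleftrightarrow> (\<forall>i<k. \<forall>t\<in>set_pmf (Dec i). valid_tree n q t)"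

definition nonadaptive :: "nat \<Rightarrow> (nat \<Rightarrow> ('s, 'o) dtree pmf) \<Rightarrow> bool" where
  "nonadaptive k Dec \<longleftrightarrow> (\<forall>i<k. \<forall>t\<in>set_pmf (Dec i). \<exists>ps. follows ps t)"

definition LDC_decoder :: "('a list \<Rightarrow> 'a list) \<Rightarrow> nat \<Rightarrow> nat \<Rightarrow> nat \<Rightarrow> real \<Rightarrow> real
    \<Rightarrow> (nat \<Rightarrow> ('a, 'a) dtree pmf) \<Rightarrow> bool" where
  "LDC_decoder C k n q \<delta> s Dec \<longleftrightarrow> query_decoder k n q Dec \<and>
     (\<forall>b i y. length b = k \<longrightarrow> i < k \<longrightarrow> length y = n \<longrightarrow> real (hamming y (C b)) \<le> \<delta> * real n \<longrightarrow>
        measure_pmf.prob (Dec i) {t. eval_tree t y \<noteq> b ! i} \<le> s)"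

definition is_LDC :: "('a list \<Rightarrow> 'a list) \<Rightarrow> nat \<Rightarrow> nat \<Rightarrow> nat \<Rightarrow> real \<Rightarrow> real \<Rightarrow> bool" where
  "is_LDC C k n q \<delta> s \<longleftrightarrow> (\<exists>Dec. LDC_decoder C k n q \<delta> s Dec)"

text \<open>(q,delta,c,s)-RLDC decoder; the output None stands for the symbol \<bottom>.\<close>
definition RLDC_decoder :: "('a list \<Rightarrow> 'a list) \<Rightarrow> nat \<Rightarrow> nat \<Rightarrow> nat \<Rightarrow> real \<Rightarrow> real \<Rightarrow> real
    \<Rightarrow> (nat \<Rightarrow> ('a, 'a option) dtree pmf) \<Rightarrow> bool" where
  "RLDC_decoder C k n q \<delta> c s Dec \<longleftrightarrow> query_decoder k n q Dec \<and>
     (\<forall>b i. length b = k \<longrightarrow> i < k \<longrightarrow>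
        measure_pmf.prob (Dec i) {t. eval_tree t (C b) = Some (b ! i)} \<ge> c) \<and>
     (\<forall>b i y. length b = k \<longrightarrow> i < k \<longrightarrow> length y = n \<longrightarrow> real (hamming y (C b)) \<le> \<delta> * real n \<longrightarrow>
        measure_pmf.prob (Dec i) {t. eval_tree t y \<notin> {Some (b ! i), None}} \<le> s)"

end

theory Submission
  imports Defs
begin

fun upd :: "nat list \<Rightarrow> 'a list \<Rightarrow> 'a list \<Rightarrow> 'a list" where
  "upd [] w y = w" | "upd (j#ps) w y = upd ps (w[j := y!j]) y"

primrec mk :: "nat list \<Rightarrow> 'a list \<Rightarrow> ('a list \<Rightarrow> 'o) \<Rightarrow> ('a,'o) dtree" where
  "mk [] w F = Leaf (F w)" | "mk (j#ps) w F = Query j (\<lambda>a. mk ps (w[j:=a]) F)"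

lemma eval_mk: "eval_tree (mk ps w F) y = F (upd ps w y)"
  by (induct ps arbitrary: w) auto

lemma length_upd[simp]: "length (upd ps w y) = length w"
  by (induct ps arbitrary: w) auto

lemma upd_nth_notin: "j \<notin> set ps \<Longrightarrow> upd ps w y ! j = w ! j"
  by (induct ps arbitrary: w) auto

lemma upd_nth_in: "j \<in> set ps \<Longrightarrow> j < length w \<Longrightarrow> upd ps w y ! j = y ! j"
proof (induct ps arbitrary: w)
  case Nil then show ?case by simp
next
  case (Cons a ps)
  show ?case
  proof (cases "j \<in> set ps")
    case True then show ?thesis using Cons by simp
  next
    case False then have "j = a" using Cons by simp
    then show ?thesis using False Cons.prems by (simp add: upd_nth_notin)
  qed
qed

lemma valid_mk: "set ps \<subseteq> {..<n} \<Longrightarrow> valid_tree n (length ps) (mk ps w F)"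
  by (induct ps arbitrary: w) (auto intro: valid_tree.intros)

lemma valid_mono: "valid_tree n q t \<Longrightarrow> q \<le> q' \<Longrightarrow> valid_tree n q' t"
proof (induct arbitrary: q' rule: valid_tree.induct)
  case (1 q v) then show ?case by (auto intro: valid_tree.intros)
next
  case (2 j q g)
  then obtain q'' where "q' = Suc q''" "q \<le> q''" by (cases q') auto
  then show ?case using 2 by (auto intro: valid_tree.intros)
qed

lemma follows_take: "valid_tree n q t \<Longrightarrow> follows ps t \<Longrightarrow> follows (take q ps) t"
proof (induct arbitrary: ps rule: valid_tree.induct)
  case (1 q v) then show ?case by (auto intro: follows.intros)
next
  case (2 j q g)
  from 2(4) obtain ps0 where "ps = j # ps0" "\<And>a. follows ps0 (g a)"
    by (cases rule: follows.cases) auto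
  then show ?case using 2 by (auto intro: follows.intros)
qed

lemma eval_agree: "valid_tree n q t \<Longrightarrow> follows ps t \<Longrightarrow> (\<forall>j\<in>set ps. j<n \<longrightarrow> z!j = z'!j)
   \<Longrightarrow> eval_tree t z = eval_tree t z'"
proof (induct arbitrary: ps rule: valid_tree.induct)
  case (1 q v) then show ?case by simp
next
  case (2 j q g)
  from 2(4) obtain ps0 where "ps = j # ps0" "\<And>a. follows ps0 (g a)"
    by (cases rule: follows.cases) auto
  then show ?case using 2 by auto
qed


lemma prob_bind_pmf:
  "measure_pmf.prob (bind_pmf M N) X = (\<integral>x. measure_pmf.prob (N x) X \<partial>M)"
proof -
  have "ennreal (measure_pmf.prob (bind_pmf M N) X) = (\<integral>\<^sup>+x. ennreal (measure_pmf.prob (N x) X) \<partial>M)"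
    by (simp add: measure_pmf.emeasure_eq_measure[symmetric])
  also have "\<dots> = ennreal (\<integral>x. measure_pmf.prob (N x) X \<partial>M)"
    by (rule nn_integral_eq_integral) (auto intro!: measure_pmf.integrable_const_bound[where B=1])
  finally show ?thesis by (simp add: integral_nonneg_AE)
qed

lemma sum_prob_le:
  fixes M :: "'t pmf" and P :: "'t \<Rightarrow> nat set"
  assumes P: "\<And>t. t \<in> set_pmf M \<Longrightarrow> P t \<subseteq> {..<n}" "\<And>t. t \<in> set_pmf M \<Longrightarrow> card (P t) \<le> q"
  shows "(\<Sum>j<n. measure_pmf.prob M {t. j \<in> P t}) \<le> real q"
proof -
  have "(\<Sum>j<n. measure_pmf.prob M {t. j \<in> P t}) = (\<Sum>j<n. \<integral>t. indicator {t. j \<in> P t} t \<partial>M)"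
    by simp
  also have "\<dots> = (\<integral>t. (\<Sum>j<n. indicator {t. j \<in> P t} t) \<partial>M)"
    by (subst Bochner_Integration.integral_sum[where f="\<lambda>j t. indicator {t. j \<in> P t} t"]) (auto intro!: measure_pmf.integrable_const_bound[where B=1])
  also have "\<dots> \<le> (\<integral>t. real q \<partial>M)"
  proof (rule integral_mono_AE)
    show "integrable (measure_pmf M) (\<lambda>t. \<Sum>j<n. indicator {t. j \<in> P t} t :: real)"
      by (intro Bochner_Integration.integrable_sum measure_pmf.integrable_const_bound[where B=1]) auto
    show "AE t in measure_pmf M. (\<Sum>j<n. indicator {t. j \<in> P t} t :: real) \<le> real q"
    proof (subst AE_measure_pmf_iff, intro ballI)
      fix t assume t: "t \<in> set_pmf M"
      have "(\<Sum>j<n. indicator {t. j \<in> P t} t :: real) = (\<Sum>j\<in>{..<n}. of_bool (j \<in> P t))"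
        by (auto intro!: sum.cong simp: indicator_def)
      also have "\<dots> = real (card ({..<n} \<inter> P t))"
        by simp
      also have "{..<n} \<inter> P t = P t" using P(1)[OF t] by auto
      finally show "(\<Sum>j<n. indicator {t. j \<in> P t} t :: real) \<le> real q" using P(2)[OF t] by simp
    qed
  qed simp
  also have "\<dots> = real q" by simp
  finally show ?thesis .
qed

lemma card_heavy:
  fixes M :: "'t pmf" and P :: "'t \<Rightarrow> nat set"
  assumes P: "\<And>t. t \<in> set_pmf M \<Longrightarrow> P t \<subseteq> {..<n}" "\<And>t. t \<in> set_pmf M \<Longrightarrow> card (P t) \<le> q"
    and d: "\<delta> > 0"
  shows "real (card {j. j<n \<and> measure_pmf.prob M {t. j \<in> P t} > real q/(\<delta>*real n)}) \<le> \<delta> * real n"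
proof (rule ccontr)
  define H where "H = {j. j<n \<and> measure_pmf.prob M {t. j \<in> P t} > real q/(\<delta>*real n)}"
  assume "\<not> ?thesis"
  then have c: "real (card H) > \<delta> * real n" unfolding H_def by simp
  moreover have "\<delta> * real n \<ge> 0" using d by simp
  ultimately have "card H \<noteq> 0" by linarith
  then have "H \<noteq> {}" by auto
  have fin: "finite H" unfolding H_def by auto
  have "real (card H) * (real q/(\<delta>*real n)) = (\<Sum>j\<in>H. real q/(\<delta>*real n))" by simp
  also have "\<dots> < (\<Sum>j\<in>H. measure_pmf.prob M {t. j \<in> P t})"
    using fin \<open>H \<noteq> {}\<close> by (intro sum_strict_mono) (auto simp: H_def)
  also have "\<dots> \<le> (\<Sum>j<n. measure_pmf.prob M {t. j \<in> P t})"
    by (intro sum_mono2) (auto simp: H_def)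
  also have "\<dots> \<le> real q" by (rule sum_prob_le[OF P])
  finally have lt: "real (card H) * (real q/(\<delta>*real n)) < real q" .
  show False
  proof (cases "n = 0")
    case True then show False using c by (simp add: H_def)
  next
    case False
    then have "\<delta> * real n > 0" using d by simp
    have "real (card H) * (real q/(\<delta>*real n)) \<ge> (\<delta> * real n) * (real q/(\<delta>*real n))"
      using c d by (intro mult_right_mono) auto
    also have "(\<delta> * real n) * (real q/(\<delta>*real n)) = real q" using False d by (simp add: field_simps)
    finally show False using lt by simp
  qed
qed

lemma hit_bound:
  fixes M :: "'t pmf" and P :: "'t \<Rightarrow> nat set"
  assumes d: "\<delta> > 0" and r: "r \<ge> 0" and D: "D \<subseteq> {..<n}" "real (card D) \<le> r * real n"
  shows "measure_pmf.prob M {t. \<exists>j\<in>P t. j \<in> D \<and> j \<notin> {j. j<n \<and> measure_pmf.prob M {t. j \<in> P t} > real q/(\<delta>*real n)}}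
     \<le> r * real q / \<delta>"
proof -
  define H where "H = {j. j<n \<and> measure_pmf.prob M {t. j \<in> P t} > real q/(\<delta>*real n)}"
  have finD: "finite (D - H)" using D(1) finite_subset by auto
  have eq: "{t. \<exists>j\<in>P t. j \<in> D \<and> j \<notin> H} = (\<Union>j\<in>D - H. {t. j \<in> P t})" by auto
  have "measure_pmf.prob M (\<Union>j\<in>D - H. {t. j \<in> P t}) \<le> (\<Sum>j\<in>D - H. measure_pmf.prob M {t. j \<in> P t})"
    by (rule measure_pmf.finite_measure_subadditive_finite[OF finD]) auto
  also have "\<dots> \<le> (\<Sum>j\<in>D - H. real q/(\<delta>*real n))"
    using D(1) by (intro sum_mono) (auto simp: H_def not_less)
  also have "\<dots> = real (card (D - H)) * (real q/(\<delta>*real n))" by simp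
  also have "\<dots> \<le> r * real q / \<delta>"
  proof (cases "n = 0")
    case True then show ?thesis using D d r by auto
  next
    case False
    have "real (card (D - H)) \<le> real (card D)"
      using D(1) finite_subset by (auto intro: card_mono)
    then have "real (card (D - H)) \<le> r * real n" using D(2) by simp
    then have "real (card (D - H)) * (real q/(\<delta>*real n)) \<le> (r * real n) * (real q/(\<delta>*real n))"
      using d by (intro mult_right_mono) auto
    also have "\<dots> = r * real q / \<delta>" using False d by (simp add: field_simps)
    finally show ?thesis .
  qed
  finally show ?thesis unfolding H_def[symmetric] eq .
qed


lemma prob_as_sum:
  assumes "finite (set_pmf M)"
  shows "measure_pmf.prob M X = (\<Sum>f\<in>set_pmf M. indicator X f * pmf M f)"
proof -
  have "measure_pmf.prob M X = (\<integral>f. indicator X f \<partial>M)" by simp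
  also have "\<dots> = (\<Sum>f\<in>set_pmf M. indicator X f * pmf M f)"
    by (rule integral_measure_pmf_real) (use assms in auto)
  finally show ?thesis .
qed

lemma sens_bound:
  fixes M :: "'t pmf" and P :: "'t \<Rightarrow> nat set" and bad :: "'t \<Rightarrow> 'a::finite list \<Rightarrow> bool"
    and c :: "'a list"
  assumes P: "\<And>t. t \<in> set_pmf M \<Longrightarrow> P t \<subseteq> {..<n}" "\<And>t. t \<in> set_pmf M \<Longrightarrow> card (P t) \<le> q"
    and loc: "\<And>t z z'. t \<in> set_pmf M \<Longrightarrow> (\<forall>j\<in>P t. z!j = z'!j) \<Longrightarrow> bad t z = bad t z'"
    and H: "H \<subseteq> {..<n}"
    and snd: "\<And>z. length z = n \<Longrightarrow> (\<forall>j<n. j \<notin> H \<longrightarrow> z!j = c!j) \<Longrightarrow> measure_pmf.prob M {t. bad t z} \<le> s"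
  shows "measure_pmf.prob M {t. \<exists>z. length z = n \<and> (\<forall>j<n. j \<notin> H \<longrightarrow> z!j = c!j) \<and> bad t z}
     \<le> s * real CARD('a)^q"
proof -
  define N where "N = real CARD('a)"
  have N1: "N \<ge> 1" unfolding N_def by (simp add: Suc_le_eq)
  define U where "U = pmf_of_set (UNIV :: 'a set)"
  define PP where "PP = Pi_pmf H undefined (\<lambda>_. U)"
  define zf where "zf f = map (\<lambda>j. if j \<in> H then f j else c!j) [0..<n]" for f :: "nat \<Rightarrow> 'a"
  define Sens where "Sens = {t. \<exists>z. length z = n \<and> (\<forall>j<n. j \<notin> H \<longrightarrow> z!j = c!j) \<and> bad t z}"
  have finH: "finite H" using H finite_subset by auto
  have zf_len: "length (zf f) = n" for f by (simp add: zf_def)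
  have zf_nth: "j < n \<Longrightarrow> zf f ! j = (if j \<in> H then f j else c!j)" for f j by (simp add: zf_def)
  have finS: "finite (set_pmf PP)"
    unfolding PP_def using finH by (subst set_Pi_pmf) auto
  have U1: "measure_pmf.prob U {a} = 1 / N" for a
    unfolding U_def N_def by (subst measure_pmf_of_set) auto
  have key1: "measure_pmf.prob PP {f. bad t (zf f)} \<ge> (1/N)^q" if t: "t \<in> set_pmf M" "t \<in> Sens" for t
  proof -
    from t(2) obtain z0 where z0: "length z0 = n" "\<forall>j<n. j \<notin> H \<longrightarrow> z0!j = c!j" "bad t z0"
      unfolding Sens_def by auto
    define A where "A = P t \<inter> H"
    define B where "B j = (if j \<in> A then {z0!j} else UNIV)" for j
    have sub: "PiE_dflt H undefined B \<subseteq> {f. bad t (zf f)}"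
    proof
      fix f assume f: "f \<in> PiE_dflt H undefined B"
      have "\<forall>j\<in>P t. zf f ! j = z0 ! j"
      proof
        fix j assume j: "j \<in> P t"
        then have jn: "j < n" using P(1)[OF t(1)] by auto
        show "zf f ! j = z0 ! j"
        proof (cases "j \<in> H")
          case True
          then have "f j \<in> B j" using f by (auto simp: PiE_dflt_def)
          then show ?thesis using True j jn by (simp add: zf_nth B_def A_def)
        next
          case False then show ?thesis using jn z0(2) by (simp add: zf_nth)
        qed
      qed
      then have "bad t (zf f) = bad t z0" by (rule loc[OF t(1)])
      then show "f \<in> {f. bad t (zf f)}" using z0(3) by simp
    qed
    have "measure_pmf.prob PP (PiE_dflt H undefined B) = (\<Prod>j\<in>H. measure_pmf.prob U (B j))"
      unfolding PP_def by (rule measure_Pi_pmf_PiE_dflt[OF finH])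
    also have "\<dots> = (\<Prod>j\<in>H. if j \<in> A then 1/N else 1)"
      by (intro prod.cong) (auto simp: B_def U1)
    also have "\<dots> = (\<Prod>j\<in>{j\<in>H. j \<in> A}. 1/N)"
      by (rule prod.inter_filter[symmetric, OF finH])
    also have "{j\<in>H. j \<in> A} = A" by (auto simp: A_def)
    also have "(\<Prod>j\<in>A. 1/N) = (1/N) ^ card A" by simp
    finally have eq: "measure_pmf.prob PP (PiE_dflt H undefined B) = (1/N) ^ card A" .
    have "card A \<le> q"
      using P(2)[OF t(1)] finite_subset[OF P(1)[OF t(1)]] card_mono[of "P t" A]
      by (auto simp: A_def)
    then have "(1/N)^q \<le> (1/N) ^ card A"
      using N1 by (intro power_decreasing) auto
    also have "\<dots> \<le> measure_pmf.prob PP {f. bad t (zf f)}"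
      using sub eq by (metis measure_pmf.finite_measure_mono sets_measure_pmf UNIV_I)
    finally show ?thesis .
  qed
  have key2: "(\<integral>t. measure_pmf.prob PP {f. bad t (zf f)} \<partial>M) \<le> s"
  proof -
    have "(\<integral>t. measure_pmf.prob PP {f. bad t (zf f)} \<partial>M)
        = (\<integral>t. (\<Sum>f\<in>set_pmf PP. indicator {t. bad t (zf f)} t * pmf PP f) \<partial>M)"
      by (subst prob_as_sum[OF finS]) (auto simp: indicator_def)
    also have "\<dots> = (\<Sum>f\<in>set_pmf PP. (\<integral>t. indicator {t. bad t (zf f)} t * pmf PP f \<partial>M))"
      by (subst Bochner_Integration.integral_sum[where f="\<lambda>f t. indicator {t. bad t (zf f)} t * pmf PP f"])
         (auto intro!: measure_pmf.integrable_const_bound[where B=1] simp: pmf_le_1)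
    also have "\<dots> = (\<Sum>f\<in>set_pmf PP. measure_pmf.prob M {t. bad t (zf f)} * pmf PP f)"
      by simp
    also have "\<dots> \<le> (\<Sum>f\<in>set_pmf PP. s * pmf PP f)"
      by (intro sum_mono mult_right_mono snd) (auto simp: zf_len zf_nth)
    also have "\<dots> = s"
      by (simp add: sum_distrib_left[symmetric] sum_pmf_eq_1[OF finS])
    finally show ?thesis .
  qed
  have "(1/N)^q * measure_pmf.prob M Sens = (\<integral>t. (1/N)^q * indicator Sens t \<partial>M)"
    by simp
  also have "\<dots> \<le> (\<integral>t. measure_pmf.prob PP {f. bad t (zf f)} \<partial>M)"
  proof (rule integral_mono_AE)
    show "integrable (measure_pmf M) (\<lambda>t. (1/N)^q * indicator Sens t)"
      by (intro integrable_mult_right measure_pmf.integrable_const_bound[where B=1]) auto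
    show "integrable (measure_pmf M) (\<lambda>t. measure_pmf.prob PP {f. bad t (zf f)})"
      by (auto intro!: measure_pmf.integrable_const_bound[where B=1])
    show "AE t in measure_pmf M. (1/N)^q * indicator Sens t \<le> measure_pmf.prob PP {f. bad t (zf f)}"
      using key1 by (auto simp: AE_measure_pmf_iff indicator_def)
  qed
  also have "\<dots> \<le> s" by (rule key2)
  finally have "(1/N)^q * measure_pmf.prob M Sens \<le> s" .
  then have "N^q * ((1/N)^q * measure_pmf.prob M Sens) \<le> N^q * s"
    using N1 by (intro mult_left_mono) auto
  then have "measure_pmf.prob M Sens \<le> N^q * s"
    using N1 by (simp add: power_one_over field_simps)
  then show ?thesis unfolding Sens_def N_def by (simp add: mult.commute)
qed


definition PL :: "nat \<Rightarrow> nat \<Rightarrow> ('s,'o) dtree \<Rightarrow> nat list" where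
  "PL n q t = filter (\<lambda>j. j < n) (take q (SOME ps. follows ps t))"

definition Cand :: "nat \<Rightarrow> nat set \<Rightarrow> ('a,'a option) dtree \<Rightarrow> 'a list \<Rightarrow> 'a set" where
  "Cand n H t y = {\<sigma>. \<exists>z. length z = n \<and> (\<forall>j<n. j \<notin> H \<longrightarrow> z!j = y!j) \<and> eval_tree t z = Some \<sigma>}"

definition outp :: "nat \<Rightarrow> nat set \<Rightarrow> ('a,'a option) dtree \<Rightarrow> 'a \<Rightarrow> 'a list \<Rightarrow> 'a" where
  "outp n H t \<sigma>0 y = (if is_singleton (Cand n H t y) then the_elem (Cand n H t y) else \<sigma>0)"

definition newtree :: "nat \<Rightarrow> nat \<Rightarrow> nat set \<Rightarrow> ('a,'a option) dtree \<Rightarrow> 'a \<Rightarrow> ('a,'a) dtree" where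
  "newtree n q H t \<sigma>0 = mk (PL n q t) (replicate n \<sigma>0) (outp n H t \<sigma>0)"

lemma PL_sub: "set (PL n q t) \<subseteq> {..<n}" by (auto simp: PL_def)

lemma PL_len: "length (PL n q t) \<le> q"
  unfolding PL_def by (metis length_filter_le length_take min.bounded_iff nle_le order_trans)

lemma PL_card: "card (set (PL n q t)) \<le> q"
  using PL_len card_length order_trans by blast

lemma eval_PL:
  assumes "valid_tree n q t" "\<exists>ps. follows ps t" "\<forall>j\<in>set (PL n q t). z!j = z'!j"
  shows "eval_tree t z = eval_tree t z'"
proof -
  have "follows (SOME ps. follows ps t) t" using assms(2) by (rule someI_ex)
  then have "follows (take q (SOME ps. follows ps t)) t" by (rule follows_take[OF assms(1)])
  then show ?thesis
    by (rule eval_agree[OF assms(1)]) (use assms(3) in \<open>auto simp: PL_def\<close>)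
qed

lemma Cand_loc1:
  assumes "valid_tree n q t" "\<exists>ps. follows ps t" "length y' = n"
    "\<forall>j\<in>set (PL n q t). y!j = y'!j"
  shows "Cand n H t y \<subseteq> Cand n H t y'"
proof
  fix \<sigma> assume "\<sigma> \<in> Cand n H t y"
  then obtain z where z: "length z = n" "\<forall>j<n. j \<notin> H \<longrightarrow> z!j = y!j" "eval_tree t z = Some \<sigma>"
    by (auto simp: Cand_def)
  define z' where "z' = map (\<lambda>j. if j \<in> set (PL n q t) \<or> j \<in> H then z!j else y'!j) [0..<n]"
  have "eval_tree t z' = eval_tree t z"
    by (rule eval_PL[OF assms(1,2)]) (use PL_sub in \<open>force simp: z'_def\<close>)
  moreover have "\<forall>j<n. j \<notin> H \<longrightarrow> z'!j = y'!j"
    using z(2) assms(4) by (auto simp: z'_def)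
  ultimately show "\<sigma> \<in> Cand n H t y'" using z(3) unfolding Cand_def
    by (intro CollectI exI[of _ z']) (simp add: z'_def)
qed

lemma eval_newtree:
  assumes "valid_tree n q t" "\<exists>ps. follows ps t" "length y = n"
  shows "eval_tree (newtree n q H t \<sigma>0) y = outp n H t \<sigma>0 y"
proof -
  define u where "u = upd (PL n q t) (replicate n \<sigma>0) y"
  have lu: "length u = n" by (simp add: u_def)
  have ag: "\<forall>j\<in>set (PL n q t). u!j = y!j"
    using PL_sub[of n q t] by (auto simp: u_def intro!: upd_nth_in)
  have "Cand n H t u = Cand n H t y"
    using Cand_loc1[OF assms(1,2,3) ag] Cand_loc1[OF assms(1,2) lu] ag by (metis subset_antisym)
  then show ?thesis by (simp add: newtree_def eval_mk u_def[symmetric] outp_def)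
qed

lemma valid_newtree: "valid_tree n q (newtree n q H t \<sigma>0)"
  unfolding newtree_def using valid_mk[OF PL_sub] PL_len valid_mono by blast

lemma prob_U_neq: "measure_pmf.prob (pmf_of_set (UNIV::'a::finite set)) {\<sigma>. \<sigma> \<noteq> x} = 1 - 1 / real CARD('a)"
proof -
  have "{\<sigma>. \<sigma> \<noteq> x} = space (measure_pmf (pmf_of_set (UNIV::'a set))) - {x}" by auto
  then have "measure_pmf.prob (pmf_of_set (UNIV::'a set)) {\<sigma>. \<sigma> \<noteq> x}
      = 1 - measure_pmf.prob (pmf_of_set (UNIV::'a set)) {x}"
    using measure_pmf.prob_compl[where A="{x}" and M="pmf_of_set (UNIV::'a set)"] by simp
  also have "measure_pmf.prob (pmf_of_set (UNIV::'a set)) {x} = 1 / real CARD('a)"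
    by (subst measure_pmf_of_set) auto
  finally show ?thesis .
qed


theorem mainTheorem6:
  fixes C :: "'a::finite list \<Rightarrow> 'a list"
    and k n q :: nat and \<delta> \<epsilon> s r :: real
    and Dec :: "nat \<Rightarrow> ('a, 'a option) dtree pmf"
  assumes code: "\<forall>b. length b = k \<longrightarrow> length (C b) = n"
    and rldc: "RLDC_decoder C k n q \<delta> (1 - \<epsilon>) s Dec"
    and nonad: "nonadaptive k Dec"
    and s_small: "s < 1 / real CARD('a) ^ q"
    and r_pos: "0 < r"
    and r_bound: "r < \<delta> * (real CARD('a) - 1) / (real q * real CARD('a)) *
        (1 - \<epsilon> * real CARD('a) / (real CARD('a) - 1) - s * real CARD('a) ^ q)"
  shows "is_LDC C k n q r (\<epsilon> + s * real CARD('a) ^ q * (1 - 1 / real CARD('a)) + r * real q / \<delta>)"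
proof -
  define N where "N = real CARD('a)"
  have N1: "N \<ge> 1" unfolding N_def by (simp add: Suc_le_eq)
  define U where "U = pmf_of_set (UNIV::'a set)"
  from rldc have qd: "query_decoder k n q Dec"
    and compl: "\<And>b i. length b = k \<Longrightarrow> i < k \<Longrightarrow>
        measure_pmf.prob (Dec i) {t. eval_tree t (C b) = Some (b ! i)} \<ge> 1 - \<epsilon>"
    and sound: "\<And>b i y. length b = k \<Longrightarrow> i < k \<Longrightarrow> length y = n \<Longrightarrow>
        real (hamming y (C b)) \<le> \<delta> * real n \<Longrightarrow>
        measure_pmf.prob (Dec i) {t. eval_tree t y \<notin> {Some (b ! i), None}} \<le> s"
    unfolding RLDC_decoder_def by blast+
  have valid: "\<And>i t. i < k \<Longrightarrow> t \<in> set_pmf (Dec i) \<Longrightarrow> valid_tree n q t"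
    using qd unfolding query_decoder_def by blast
  have fol: "\<And>i t. i < k \<Longrightarrow> t \<in> set_pmf (Dec i) \<Longrightarrow> \<exists>ps. follows ps t"
    using nonad unfolding nonadaptive_def by blast
  show ?thesis
  proof (cases "\<delta> > 0")
    case dpos: True
    define P where "P t = set (PL n q t)" for t :: "('a, 'a option) dtree"
    define H where "H i = {j. j<n \<and> measure_pmf.prob (Dec i) {t. j \<in> P t} > real q/(\<delta>*real n)}" for i
    define Dec' where "Dec' i = bind_pmf (Dec i) (\<lambda>t. map_pmf (newtree n q (H i) t) U)" for i
    have P_sub: "P t \<subseteq> {..<n}" for t unfolding P_def by (rule PL_sub)
    have P_card: "card (P t) \<le> q" for t unfolding P_def by (rule PL_card)
    have "LDC_decoder C k n q r (\<epsilon> + s * N ^ q * (1 - 1 / N) + r * real q / \<delta>) Dec'"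
      unfolding LDC_decoder_def
    proof (intro conjI allI impI)
      show "query_decoder k n q Dec'"
        unfolding query_decoder_def Dec'_def by (auto simp: valid_newtree)
      fix b i y assume b: "length b = k" and i: "i < k" and y: "length y = n"
        and hy: "real (hamming y (C b)) \<le> r * real n"
      define c where "c = C b"
      have lc: "length c = n" using code b by (simp add: c_def)
      define D where "D = {j. j<n \<and> y!j \<noteq> c!j}"
      have cardD: "real (card D) \<le> r * real n"
        using hy y lc by (simp add: hamming_def D_def c_def[symmetric])
      define G where "G = {t. eval_tree t c = Some (b!i)}"
      define Hit where "Hit = {t. \<exists>j\<in>P t. j \<in> D \<and> j \<notin> H i}"
      define Sens where "Sens = {t. \<exists>z. length z = n \<and> (\<forall>j<n. j \<notin> H i \<longrightarrow> z!j = c!j) \<and>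
          eval_tree t z \<notin> {Some (b!i), None}}"
      have pG: "measure_pmf.prob (Dec i) (-G) \<le> \<epsilon>"
      proof -
        have "measure_pmf.prob (Dec i) (-G) = 1 - measure_pmf.prob (Dec i) G"
          using measure_pmf.prob_compl[where A=G and M="Dec i"] by (simp add: Compl_eq_Diff_UNIV)
        then show ?thesis using compl[OF b i] by (simp add: G_def c_def)
      qed
      have pHit: "measure_pmf.prob (Dec i) Hit \<le> r * real q / \<delta>"
        unfolding Hit_def H_def
        by (rule hit_bound[OF dpos]) (use r_pos cardD in \<open>auto simp: D_def\<close>)
      have cardH: "real (card (H i)) \<le> \<delta> * real n"
        unfolding H_def by (rule card_heavy[OF _ _ dpos]) (auto simp: P_sub P_card)
      have pSens: "measure_pmf.prob (Dec i) Sens \<le> s * N ^ q"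
        unfolding Sens_def N_def
      proof (rule sens_bound[where P=P])
        show "P t \<subseteq> {..<n}" for t by (rule P_sub)
        show "card (P t) \<le> q" for t by (rule P_card)
        show "H i \<subseteq> {..<n}" by (auto simp: H_def)
        show "(eval_tree t z \<notin> {Some (b!i), None}) = (eval_tree t z' \<notin> {Some (b!i), None})"
          if "t \<in> set_pmf (Dec i)" "\<forall>j\<in>P t. z!j = z'!j" for t z z'
          using eval_PL[OF valid[OF i that(1)] fol[OF i that(1)], of z z'] that(2) by (simp add: P_def)
        show "measure_pmf.prob (Dec i) {t. eval_tree t z \<notin> {Some (b!i), None}} \<le> s"
          if z: "length z = n" "\<forall>j<n. j \<notin> H i \<longrightarrow> z!j = c!j" for z
        proof (rule sound[OF b i z(1)])
          have "{j. j < length z \<and> j < length (C b) \<and> z ! j \<noteq> C b ! j} \<subseteq> H i"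
            using z lc by (auto simp: c_def)
          then have "card {j. j < length z \<and> j < length (C b) \<and> z ! j \<noteq> C b ! j} \<le> card (H i)"
            by (rule card_mono[rotated]) (auto simp: H_def)
          then show "real (hamming z (C b)) \<le> \<delta> * real n"
            using cardH unfolding hamming_def by linarith
        qed
      qed
      have point: "measure_pmf.prob (map_pmf (newtree n q (H i) t) U) {t'. eval_tree t' y \<noteq> b!i}
          \<le> indicator (-G \<union> Hit) t + (1 - 1/N) * indicator Sens t"
        if t: "t \<in> set_pmf (Dec i)" for t
      proof -
        have vt: "valid_tree n q t" and ft: "\<exists>ps. follows ps t" using valid[OF i t] fol[OF i t] by auto
        define Cd where "Cd = Cand n (H i) t y"
        have eq: "measure_pmf.prob (map_pmf (newtree n q (H i) t) U) {t'. eval_tree t' y \<noteq> b!i}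
            = measure_pmf.prob U {\<sigma>0. (if is_singleton Cd then the_elem Cd else \<sigma>0) \<noteq> b!i}"
          by (simp add: eval_newtree[OF vt ft y] outp_def Cd_def vimage_def)
        have N1': "0 \<le> 1 - 1/N" using N1 by simp
        show ?thesis
        proof (cases "t \<in> -G \<union> Hit")
          case True
          have "measure_pmf.prob (map_pmf (newtree n q (H i) t) U) {t'. eval_tree t' y \<noteq> b!i} \<le> 1"
            by simp
          moreover have "indicator (-G \<union> Hit) t = (1::real)" using True by simp
          moreover have "(1-1/N) * indicator Sens t \<ge> (0::real)" using N1' by simp
          ultimately show ?thesis by linarith
        next
          case False
          then have tG: "eval_tree t c = Some (b!i)" and nH: "\<forall>j\<in>P t. j \<in> D \<longrightarrow> j \<in> H i"
            by (auto simp: G_def Hit_def)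
          have inC: "b!i \<in> Cd"
          proof -
            define z where "z = map (\<lambda>j. if j \<in> P t then c!j else y!j) [0..<n]"
            have "eval_tree t z = eval_tree t c"
              by (rule eval_PL[OF vt ft]) (use P_sub in \<open>force simp: z_def P_def\<close>)
            moreover have "\<forall>j<n. j \<notin> H i \<longrightarrow> z!j = y!j"
              using nH by (auto simp: z_def D_def)
            ultimately show ?thesis using tG unfolding Cd_def Cand_def
              by (intro CollectI exI[of _ z]) (simp add: z_def)
          qed
          show ?thesis
          proof (cases "t \<in> Sens")
            case True
            show ?thesis
            proof (cases "is_singleton Cd")
              case True
              then have "the_elem Cd = b!i" using inC
                by (metis is_singleton_the_elem singletonD)
              then show ?thesis using \<open>is_singleton Cd\<close> eq N1' by (simp add: indicator_def)
            next
              case False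
              then have "measure_pmf.prob (map_pmf (newtree n q (H i) t) U) {t'. eval_tree t' y \<noteq> b!i}
                  = 1 - 1/N"
                using eq by (simp add: U_def N_def prob_U_neq)
              then show ?thesis using \<open>t \<in> Sens\<close> by (simp add: indicator_def)
            qed
          next
            case False
            have "Cd \<subseteq> {b!i}"
            proof
              fix \<sigma> assume "\<sigma> \<in> Cd"
              then obtain z where z: "length z = n" "\<forall>j<n. j \<notin> H i \<longrightarrow> z!j = y!j"
                  "eval_tree t z = Some \<sigma>"
                by (auto simp: Cd_def Cand_def)
              define z' where "z' = map (\<lambda>j. if j \<in> H i then z!j else c!j) [0..<n]"
              have "eval_tree t z' = eval_tree t z"
              proof (rule eval_PL[OF vt ft], intro ballI)
                fix j assume j: "j \<in> set (PL n q t)"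
                then have jn: "j < n" using PL_sub by auto
                show "z' ! j = z ! j"
                proof (cases "j \<in> H i")
                  case True then show ?thesis using jn by (simp add: z'_def)
                next
                  case False
                  then have "j \<notin> D" using nH j by (auto simp: P_def)
                  then show ?thesis using False jn z(2) by (simp add: z'_def D_def)
                qed
              qed
              moreover have "length z' = n" "\<forall>j<n. j \<notin> H i \<longrightarrow> z'!j = c!j"
                by (auto simp: z'_def)
              ultimately have "eval_tree t z \<in> {Some (b!i), None}"
                using \<open>t \<notin> Sens\<close> unfolding Sens_def by auto
              then show "\<sigma> \<in> {b!i}" using z(3) by auto
            qed
            then have "Cd = {b!i}" using inC by auto
            then show ?thesis using eq N1' by (simp add: indicator_def)
          qed
        qed
      qed
      have "measure_pmf.prob (Dec' i) {t. eval_tree t y \<noteq> b ! i}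
          = (\<integral>t. measure_pmf.prob (map_pmf (newtree n q (H i) t) U) {t'. eval_tree t' y \<noteq> b!i} \<partial>Dec i)"
        unfolding Dec'_def by (rule prob_bind_pmf)
      also have "\<dots> \<le> (\<integral>t. indicator (-G \<union> Hit) t + (1 - 1/N) * indicator Sens t \<partial>Dec i)"
      proof (rule integral_mono_AE)
        show "integrable (measure_pmf (Dec i))
            (\<lambda>t. measure_pmf.prob (map_pmf (newtree n q (H i) t) U) {t'. eval_tree t' y \<noteq> b!i})"
          by (auto intro!: measure_pmf.integrable_const_bound[where B=1])
        show "integrable (measure_pmf (Dec i)) (\<lambda>t. indicator (-G \<union> Hit) t + (1 - 1/N) * indicator Sens t :: real)"
          by (intro Bochner_Integration.integrable_add integrable_mult_right
              measure_pmf.integrable_const_bound[where B=1]) auto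
        show "AE t in measure_pmf (Dec i).
            measure_pmf.prob (map_pmf (newtree n q (H i) t) U) {t'. eval_tree t' y \<noteq> b!i}
            \<le> indicator (-G \<union> Hit) t + (1 - 1/N) * indicator Sens t"
          using point by (simp add: AE_measure_pmf_iff)
      qed
      also have "\<dots> = measure_pmf.prob (Dec i) (-G \<union> Hit) + (1 - 1/N) * measure_pmf.prob (Dec i) Sens"
        by (subst Bochner_Integration.integral_add)
           (auto intro!: integrable_mult_right measure_pmf.integrable_const_bound[where B=1])
      also have "\<dots> \<le> (\<epsilon> + r * real q / \<delta>) + (1 - 1/N) * (s * N ^ q)"
      proof (rule add_mono)
        have "measure_pmf.prob (Dec i) (-G \<union> Hit) \<le> measure_pmf.prob (Dec i) (-G) + measure_pmf.prob (Dec i) Hit"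
          by (rule measure_Un_le) auto
        then show "measure_pmf.prob (Dec i) (-G \<union> Hit) \<le> \<epsilon> + r * real q / \<delta>"
          using pG pHit by linarith
        show "(1 - 1/N) * measure_pmf.prob (Dec i) Sens \<le> (1 - 1/N) * (s * N ^ q)"
          using pSens N1 by (intro mult_left_mono) auto
      qed
      also have "\<dots> = \<epsilon> + s * N ^ q * (1 - 1 / N) + r * real q / \<delta>" by (simp add: algebra_simps)
      finally show "measure_pmf.prob (Dec' i) {t. eval_tree t y \<noteq> b ! i}
          \<le> \<epsilon> + s * N ^ q * (1 - 1 / N) + r * real q / \<delta>" .
    qed
    then show ?thesis unfolding is_LDC_def N_def by blast
  next
    case False
    define B where "B = 1 - \<epsilon> * N / (N - 1) - s * N ^ q"
    have rb: "r < \<delta> * (N - 1) / (real q * N) * B"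
      using r_bound unfolding B_def N_def .
    have q0: "q \<noteq> 0"
    proof
      assume "q = 0" then show False using rb r_pos by simp
    qed
    have N2: "N \<noteq> 1"
    proof
      assume "N = 1" then show False using rb r_pos by simp
    qed
    then have N2': "N - 1 > 0" using N1 by simp
    have d0: "\<delta> \<noteq> 0"
    proof
      assume "\<delta> = 0" then show False using rb r_pos by simp
    qed
    then have dneg: "\<delta> < 0" using False by simp
    have qd0: "real q / \<delta> < 0" using q0 dneg by (simp add: divide_pos_neg)
    have "(\<delta> * (N - 1) / (real q * N) * B) * (real q / \<delta>) < r * (real q / \<delta>)"
      by (rule mult_strict_right_mono_neg[OF rb qd0])
    also have "(\<delta> * (N - 1) / (real q * N) * B) * (real q / \<delta>) = (N - 1) / N * B"
      using q0 d0 N1 by (simp add: field_simps)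
    also have "(N - 1) / N * B = (1 - 1/N) - \<epsilon> - s * N ^ q * (1 - 1/N)"
      using N2' N1 by (simp add: B_def field_simps)
    finally have ineq: "1 - 1/N \<le> \<epsilon> + s * N ^ q * (1 - 1 / N) + r * real q / \<delta>"
      by simp
    define Dec' where "Dec' i = (map_pmf Leaf U :: ('a,'a) dtree pmf)" for i :: nat
    have "LDC_decoder C k n q r (\<epsilon> + s * N ^ q * (1 - 1 / N) + r * real q / \<delta>) Dec'"
      unfolding LDC_decoder_def
    proof (intro conjI allI impI)
      show "query_decoder k n q Dec'"
        unfolding query_decoder_def Dec'_def by (auto intro: valid_tree.intros)
      fix b i y
      have "measure_pmf.prob (Dec' i) {t. eval_tree t y \<noteq> b ! i} = 1 - 1/N"
        by (simp add: Dec'_def vimage_def U_def N_def prob_U_neq)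
      then show "measure_pmf.prob (Dec' i) {t. eval_tree t y \<noteq> b ! i}
          \<le> \<epsilon> + s * N ^ q * (1 - 1 / N) + r * real q / \<delta>" using ineq by simp
    qed
    then show ?thesis unfolding is_LDC_def N_def by blast
  qed
qed

end
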